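(* Let $X$, $Y$ and $(Z,d)$ be metric spaces, $1\le\alpha<\omega_1$, and let $f\colon X\times Y\to Z$ satisfy: (1) the family $\{f^x:x\in X\}$ of $x$-sections is equi-$\alpha$-GLP (as functions $Y\to Z$); (2) for every $y\in Y$ the $y$-section $f_y\colon X\to Z$ is of Borel class $\alpha$. Then $f\colon X\times Y\to Z$ is of Borel class $\alpha$.
   Context: For $x\in X$, $y\in Y$: $f^x\colon Y\to Z$, $f^x(y)=f(x,y)$ and $f_y\colon X\to Z$, $f_y(x)=f(x,y)$. In a metric space, sets of additive class $0$ are the open sets, of multiplicative class $0$ the closed sets; for $\alpha\ge1$, sets of additive class $\alpha$ are countable unions of sets of multiplicative classes $<\alpha$, and sets of multiplicative class $\alpha$ are complements of sets of additive class $\alpha$ (so additive class 1 = $F_\sigma$). A function between metric spaces is of Borel class $\alpha$ if the preimage of every open set is of additive class $\alpha$. A family of subsets of $Y$ is discrete if each point has a neighborhood meeting at most one member; $\sigma$-discrete if it is a countable union of discrete families. A family $\mathscr F\subseteq Z^Y$ is equi-$\alpha$-GLP if for every $\varepsilon>0$ there is a $\sigma$-discrete family $\mathcal A_\varepsilon$ of subsets of $Y$ of additive class $\alpha$ such that $Y=\bigcup\mathcal A_\varepsilon$ and $\operatorname{diam}g(A)\le\varepsilon$ for all $A\in\mathcal A_\varepsilon$ and all $g\in\mathscr F$. *)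

theory Defs
  imports "HOL-Analysis.Analysis"
begin

text \<open>Countable ordinals \<open>\<alpha>\<close> are represented as order types of well-orders
  \<open>r :: (nat \<times> nat) set\<close>.  For \<open>a \<in> Field r\<close>, \<open>add_class_below r a\<close> is the family of
  sets of additive class \<open>\<beta>\<close>, where \<open>\<beta>\<close> is the order type of the strict initial
  segment of \<open>r\<close> below \<open>a\<close>.  Ordinals \<open>\<beta>\<close> smaller than the order type of \<open>r\<close>
  are exactly these order types.\<close>

definition add_class_below :: "(nat \<times> nat) set \<Rightarrow> nat \<Rightarrow> 'a::topological_space set set" where
  "add_class_below r = wfrec (r - Id)
     (\<lambda>C a. if \<not> (\<exists>b. (b, a) \<in> r - Id) then {U. open U}
            else {\<Union>\<U> | \<U>. countable \<U> \<and> (\<forall>V\<in>\<U>. \<exists>b. (b, a) \<in> r - Id \<and> - V \<in> C b)})"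

text \<open>Sets of additive class \<open>\<alpha>\<close>, \<open>\<alpha>\<close> = order type of \<open>r\<close>: open sets if \<open>\<alpha> = 0\<close>,
  otherwise countable unions of sets of multiplicative class \<open>\<beta> < \<alpha>\<close>
  (i.e. complements of sets of additive class \<open>\<beta>\<close>).\<close>

definition additive_class :: "(nat \<times> nat) set \<Rightarrow> 'a::topological_space set \<Rightarrow> bool" where
  "additive_class r A \<longleftrightarrow>
     (if Field r = {} then open A
      else (\<exists>\<U>. countable \<U> \<and> A = \<Union>\<U> \<and> (\<forall>V\<in>\<U>. \<exists>b\<in>Field r. - V \<in> add_class_below r b)))"

definition borel_class :: "(nat \<times> nat) set \<Rightarrow> ('a::topological_space \<Rightarrow> 'b::topological_space) \<Rightarrow> bool" where
  "borel_class r f \<longleftrightarrow> (\<forall>U. open U \<longrightarrow> additive_class r (f -` U))"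

definition discrete_family :: "'a::topological_space set set \<Rightarrow> bool" where
  "discrete_family \<A> \<longleftrightarrow>
     (\<forall>y. \<exists>U. open U \<and> y \<in> U \<and> (\<forall>A\<in>\<A>. \<forall>B\<in>\<A>. U \<inter> A \<noteq> {} \<and> U \<inter> B \<noteq> {} \<longrightarrow> A = B))"

definition sigma_discrete_family :: "'a::topological_space set set \<Rightarrow> bool" where
  "sigma_discrete_family \<A> \<longleftrightarrow>
     (\<exists>\<D>::nat \<Rightarrow> 'a set set. (\<forall>n. discrete_family (\<D> n)) \<and> \<A> = (\<Union>n. \<D> n))"

definition equi_GLP :: "(nat \<times> nat) set \<Rightarrow> ('b::metric_space \<Rightarrow> 'c::metric_space) set \<Rightarrow> bool" where
  "equi_GLP r \<F> \<longleftrightarrow>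
     (\<forall>\<epsilon>>0. \<exists>\<A>. sigma_discrete_family \<A> \<and> (\<forall>A\<in>\<A>. additive_class r A) \<and> \<Union>\<A> = UNIV \<and>
        (\<forall>A\<in>\<A>. \<forall>g\<in>\<F>. \<forall>a\<in>A. \<forall>b\<in>A. dist (g a) (g b) \<le> \<epsilon>))"

end

theory Submission
  imports Defs
begin
lemma open_fsig:
  assumes "open (S::'a::metric_space set)"
  shows "\<exists>\<U>. countable \<U> \<and> (\<forall>F\<in>\<U>. closed F) \<and> \<Union>\<U> = S"
proof -
  have "fsigma_in euclidean S"
    by (rule open_imp_fsigma_in[OF metrizable_space_euclidean]) (use assms in \<open>simp only: open_openin\<close>)
  then have "\<exists>\<U>. countable \<U> \<and> \<U> \<subseteq> Collect (closedin euclidean) \<and> \<Union>\<U> = S"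
    by (simp only: fsigma_in_def union_of_def)
  then obtain \<U> where U: "countable \<U>" "\<U> \<subseteq> Collect (closedin euclidean)" "\<Union>\<U> = S"
    by (elim exE conjE)
  have "\<forall>F\<in>\<U>. closed F" using U(2) by auto
  then show ?thesis using U(1,3) by (intro exI[of _ \<U>] conjI)
qed

definition pred :: "(nat \<times> nat) set \<Rightarrow> nat \<Rightarrow> nat set" where
  "pred r a = {b. (b, a) \<in> r - Id}"

lemma wo_wf: "Well_order r \<Longrightarrow> wf (r - Id)"
  by (simp add: well_order_on_def)

lemma acb_unfold:
  assumes "Well_order r"
  shows "add_class_below r a = (if pred r a = {} then {U. open U}
     else {\<Union>\<U> | \<U>. countable \<U> \<and> (\<forall>V\<in>\<U>. \<exists>b\<in>pred r a. - V \<in> add_class_below r b)})"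
proof -
  have cc: "\<And>b R g P. ((b,a)\<in>R \<and> P (cut g R a b)) = ((b,a)\<in>R \<and> P (g b))"
    by (auto simp: cut_def)
  show ?thesis
    unfolding add_class_below_def
    apply (subst wfrec[OF wo_wf[OF assms]])
    apply (simp only: cc)
    apply (simp add: pred_def Bex_def)
    apply (rule impI, rule impI)
    apply (elim exE conjE)
    apply (drule spec, drule mp, assumption)
    apply (erule notE, assumption)
    done
qed

lemma acb_induct:
  assumes "Well_order r" and "\<And>a. (\<And>b. b \<in> pred r a \<Longrightarrow> P b) \<Longrightarrow> P a"
  shows "P a"
proof (rule wf_induct[where P=P, OF wo_wf[OF assms(1)]])
  fix x assume IH: "\<forall>y. (y, x) \<in> r - Id \<longrightarrow> P y"
  show "P x"
  proof (rule assms(2))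
    fix b assume "b \<in> pred r x"
    then have "(b, x) \<in> r - Id" by (simp add: pred_def)
    then show "P b" using IH by blast
  qed
qed

lemma acb_open:
  assumes wo: "Well_order r" and "open (S::'a::metric_space set)"
  shows "S \<in> add_class_below r a"
  using assms(2)
proof (induct a arbitrary: S rule: acb_induct[OF wo])
  case (1 a)
  show ?case
  proof (cases "pred r a = {}")
    case True then show ?thesis using 1 by (subst acb_unfold[OF wo]) simp
  next
    case False
    then obtain b where b: "b \<in> pred r a" by auto
    obtain \<U> where U: "countable \<U>" "\<forall>F\<in>\<U>. closed F" "\<Union>\<U> = S" using open_fsig[OF 1(2)] by blast
    have "\<forall>V\<in>\<U>. \<exists>b\<in>pred r a. - V \<in> add_class_below r b"
    proof
      fix V assume "V \<in> \<U>"
      then have "open (- V)" using U(2) by auto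
      then have "- V \<in> add_class_below r b" by (rule 1(1)[OF b])
      then show "\<exists>b\<in>pred r a. - V \<in> add_class_below r b" using b by blast
    qed
    then have "S \<in> {\<Union>\<U> | \<U>. countable \<U> \<and> (\<forall>V\<in>\<U>. \<exists>b\<in>pred r a. - V \<in> add_class_below r b)}"
      using U(1,3) by blast
    then show ?thesis using False by (subst acb_unfold[OF wo]) simp
  qed
qed


lemma cu_iff:
  assumes "K \<noteq> {}" "\<forall>b\<in>K. UNIV \<in> C b"
  shows "(\<exists>\<U>. countable \<U> \<and> A = \<Union>\<U> \<and> (\<forall>V\<in>\<U>. \<exists>b\<in>K. - V \<in> C b)) \<longleftrightarrow>
         (\<exists>N c. (\<forall>k::nat. c k \<in> K \<and> - N k \<in> C (c k)) \<and> A = (\<Union>k. N k))"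
proof
  assume "\<exists>\<U>. countable \<U> \<and> A = \<Union>\<U> \<and> (\<forall>V\<in>\<U>. \<exists>b\<in>K. - V \<in> C b)"
  then obtain \<U> where U: "countable \<U>" "A = \<Union>\<U>" "\<forall>V\<in>\<U>. \<exists>b\<in>K. - V \<in> C b" by blast
  show "\<exists>N c. (\<forall>k::nat. c k \<in> K \<and> - N k \<in> C (c k)) \<and> A = (\<Union>k. N k)"
  proof (cases "\<U> = {}")
    case True
    obtain b where b: "b \<in> K" using assms(1) by blast
    have "(\<forall>k::nat. (\<lambda>k. b) k \<in> K \<and> - (\<lambda>k. {}) k \<in> C ((\<lambda>k. b) k)) \<and> A = (\<Union>k. (\<lambda>k. {}) k)"
      using b assms(2) U(2) True by simp
    then show ?thesis by (intro exI[of _ "\<lambda>k. {}"] exI[of _ "\<lambda>k. b"])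
  next
    case False
    define N where "N = from_nat_into \<U>"
    have "\<forall>k. \<exists>b. b \<in> K \<and> - N k \<in> C b"
      using U(3) from_nat_into[OF False] unfolding N_def by blast
    then obtain c where c: "\<forall>k. c k \<in> K \<and> - N k \<in> C (c k)" by (metis choice)
    have "A = (\<Union>k. N k)" unfolding N_def using U(1,2) False by simp
    then show ?thesis using c by blast
  qed
next
  assume "\<exists>N c. (\<forall>k::nat. c k \<in> K \<and> - N k \<in> C (c k)) \<and> A = (\<Union>k. N k)"
  then obtain N c where Nc: "\<forall>k::nat. c k \<in> K \<and> - N k \<in> C (c k)" "A = (\<Union>k. N k)" by blast
  have "countable (range N)" by simp
  moreover have "\<forall>V\<in>range N. \<exists>b\<in>K. - V \<in> C b" using Nc(1) by blast
  ultimately show "\<exists>\<U>. countable \<U> \<and> A = \<Union>\<U> \<and> (\<forall>V\<in>\<U>. \<exists>b\<in>K. - V \<in> C b)"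
    using Nc(2) by blast
qed

lemma acb_min:
  assumes "Well_order r" "pred r a = {}"
  shows "A \<in> add_class_below r a \<longleftrightarrow> open A"
  by (subst acb_unfold[OF assms(1)]) (simp add: assms(2))

lemma acb_mem:
  assumes "Well_order r" "pred r a \<noteq> {}"
  shows "A \<in> add_class_below r a \<longleftrightarrow>
     (\<exists>\<U>. countable \<U> \<and> A = \<Union>\<U> \<and> (\<forall>V\<in>\<U>. \<exists>b\<in>pred r a. - V \<in> add_class_below r b))"
proof -
  have "A \<in> add_class_below r a \<longleftrightarrow>
     A \<in> {\<Union>\<U> | \<U>. countable \<U> \<and> (\<forall>V\<in>\<U>. \<exists>b\<in>pred r a. - V \<in> add_class_below r b)}"
    by (subst acb_unfold[OF assms(1)]) (simp only: assms(2) if_False)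
  also have "\<dots> \<longleftrightarrow> (\<exists>\<U>. countable \<U> \<and> A = \<Union>\<U> \<and> (\<forall>V\<in>\<U>. \<exists>b\<in>pred r a. - V \<in> add_class_below r b))"
    by blast
  finally show ?thesis .
qed

lemma acb_UNIV:
  assumes "Well_order r"
  shows "(UNIV::'a::metric_space set) \<in> add_class_below r a"
  by (rule acb_open[OF assms]) simp

lemma acb_cu:
  assumes "Well_order r" "pred r a \<noteq> {}"
  shows "(A::'a::metric_space set) \<in> add_class_below r a \<longleftrightarrow>
     (\<exists>N c. (\<forall>k::nat. c k \<in> pred r a \<and> - N k \<in> add_class_below r (c k)) \<and> A = (\<Union>k. N k))"
  unfolding acb_mem[OF assms]
  by (rule cu_iff[OF assms(2)]) (simp add: acb_UNIV[OF assms(1)])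

lemma acb_Un:
  assumes wo: "Well_order r" and "(A::'a::metric_space set) \<in> add_class_below r a" "B \<in> add_class_below r a"
  shows "A \<union> B \<in> add_class_below r a"
proof (cases "pred r a = {}")
  case True then show ?thesis using assms by (simp add: acb_min[OF wo True] open_Un)
next
  case False
  obtain \<U> where U: "countable \<U>" "A = \<Union>\<U>" "\<forall>V\<in>\<U>. \<exists>b\<in>pred r a. - V \<in> add_class_below r b"
    using assms(2) unfolding acb_mem[OF wo False] by blast
  obtain \<V> where V: "countable \<V>" "B = \<Union>\<V>" "\<forall>V\<in>\<V>. \<exists>b\<in>pred r a. - V \<in> add_class_below r b"
    using assms(3) unfolding acb_mem[OF wo False] by blast
  have "countable (\<U> \<union> \<V>)" using U(1) V(1) by simp
  moreover have "A \<union> B = \<Union>(\<U> \<union> \<V>)" using U(2) V(2) by simp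
  moreover have "\<forall>V\<in>\<U> \<union> \<V>. \<exists>b\<in>pred r a. - V \<in> add_class_below r b" using U(3) V(3) by blast
  ultimately show ?thesis unfolding acb_mem[OF wo False] by blast
qed

lemma acb_open_Int:
  assumes wo: "Well_order r" and "open G" "(A::'a::metric_space set) \<in> add_class_below r a"
  shows "G \<inter> A \<in> add_class_below r a"
proof (cases "pred r a = {}")
  case True then show ?thesis using assms by (simp add: acb_min[OF wo True] open_Int)
next
  case False
  obtain \<U> where U: "countable \<U>" "A = \<Union>\<U>" "\<forall>V\<in>\<U>. \<exists>b\<in>pred r a. - V \<in> add_class_below r b"
    using assms(3) unfolding acb_mem[OF wo False] by blast
  obtain \<F> where F: "countable \<F>" "\<forall>F\<in>\<F>. closed F" "\<Union>\<F> = G" using open_fsig[OF assms(2)] by blast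
  define \<W> where "\<W> = (\<lambda>(F, V). F \<inter> V) ` (\<F> \<times> \<U>)"
  have "countable \<W>" unfolding \<W>_def using F(1) U(1) by simp
  moreover have "G \<inter> A = \<Union>\<W>" unfolding \<W>_def using F(3) U(2) by blast
  moreover have "\<forall>W\<in>\<W>. \<exists>b\<in>pred r a. - W \<in> add_class_below r b"
  proof
    fix W assume "W \<in> \<W>"
    then obtain F V where FV: "F \<in> \<F>" "V \<in> \<U>" "W = F \<inter> V" unfolding \<W>_def by blast
    obtain b where b: "b \<in> pred r a" "- V \<in> add_class_below r b" using U(3) FV(2) by blast
    have "- F \<in> add_class_below r b" by (rule acb_open[OF wo]) (use F(2) FV(1) in auto)
    then have "- F \<union> - V \<in> add_class_below r b" by (rule acb_Un[OF wo _ b(2)])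
    then show "\<exists>b\<in>pred r a. - W \<in> add_class_below r b" using b(1) FV(3) by auto
  qed
  ultimately show ?thesis unfolding acb_mem[OF wo False] by blast
qed


lemma wo_trans_antisym:
  assumes "Well_order r" shows "trans r" "antisym r"
  using assms unfolding well_order_on_def linear_order_on_def partial_order_on_def preorder_on_def
  by auto

lemma pred_trans:
  assumes wo: "Well_order r" and "c \<in> pred r b" "(b, a) \<in> r - Id"
  shows "c \<in> pred r a"
proof -
  have cb: "(c, b) \<in> r" "c \<noteq> b" using assms(2) by (auto simp: pred_def)
  have ba: "(b, a) \<in> r" "b \<noteq> a" using assms(3) by auto
  have "(c, a) \<in> r" using wo_trans_antisym(1)[OF wo] cb(1) ba(1) unfolding trans_def by blast
  moreover have "c \<noteq> a"
  proof
    assume "c = a"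
    then have "(a, b) \<in> r" using cb(1) by simp
    then have "a = b" using ba(1) wo_trans_antisym(2)[OF wo] unfolding antisym_def by blast
    then show False using ba(2) by simp
  qed
  ultimately show ?thesis by (simp add: pred_def)
qed

lemma acb_mono:
  assumes wo: "Well_order r" and "(b, a) \<in> r" "(A::'a::metric_space set) \<in> add_class_below r b"
  shows "A \<in> add_class_below r a"
proof (cases "b = a")
  case True then show ?thesis using assms(3) by simp
next
  case False
  then have ba: "(b, a) \<in> r - Id" using assms(2) by simp
  then have pa: "pred r a \<noteq> {}" by (auto simp: pred_def)
  show ?thesis
  proof (cases "pred r b = {}")
    case True
    have "open A" using acb_min[OF wo True] assms(3) by blast
    then show ?thesis by (rule acb_open[OF wo])
  next
    case pb: False
    obtain \<U> where U: "countable \<U>" "A = \<Union>\<U>" "\<forall>V\<in>\<U>. \<exists>c\<in>pred r b. - V \<in> add_class_below r c"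
      using assms(3) unfolding acb_mem[OF wo pb] by blast
    have "\<forall>V\<in>\<U>. \<exists>c\<in>pred r a. - V \<in> add_class_below r c"
      using U(3) pred_trans[OF wo _ ba] by blast
    then show ?thesis unfolding acb_mem[OF wo pa] using U(1,2) by blast
  qed
qed

lemma acb_vimage:
  assumes wo: "Well_order r" and g: "\<forall>S. open S \<longrightarrow> open (g -` S)"
    and "A \<in> add_class_below r a"
  shows "g -` A \<in> add_class_below r a"
  using assms(3)
proof (induct a arbitrary: A rule: acb_induct[OF wo])
  case (1 a)
  show ?case
  proof (cases "pred r a = {}")
    case True then show ?thesis using 1(2) g by (simp add: acb_min[OF wo True])
  next
    case False
    obtain \<U> where U: "countable \<U>" "A = \<Union>\<U>" "\<forall>V\<in>\<U>. \<exists>c\<in>pred r a. - V \<in> add_class_below r c"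
      using 1(2) unfolding acb_mem[OF wo False] by blast
    have "countable (vimage g ` \<U>)" using U(1) by simp
    moreover have "g -` A = \<Union>(vimage g ` \<U>)" using U(2) by auto
    moreover have "\<forall>W\<in>vimage g ` \<U>. \<exists>c\<in>pred r a. - W \<in> add_class_below r c"
    proof
      fix W assume "W \<in> vimage g ` \<U>"
      then obtain V where V: "V \<in> \<U>" "W = g -` V" by blast
      obtain c where c: "c \<in> pred r a" "- V \<in> add_class_below r c" using U(3) V(1) by blast
      have "g -` (- V) \<in> add_class_below r c" by (rule 1(1)[OF c])
      then show "\<exists>c\<in>pred r a. - W \<in> add_class_below r c" using c(1) V(2) by (auto simp: vimage_Compl)
    qed
    ultimately show ?thesis unfolding acb_mem[OF wo False] by blast
  qed
qed

definition disc :: "'i set \<Rightarrow> ('i \<Rightarrow> 'x::topological_space set) \<Rightarrow> bool" where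
  "disc I S \<longleftrightarrow> (\<forall>t. \<exists>U. open U \<and> t \<in> U \<and> (\<forall>i\<in>I. \<forall>j\<in>I. U \<inter> S i \<noteq> {} \<and> U \<inter> S j \<noteq> {} \<longrightarrow> i = j))"

lemma discD:
  assumes "disc I S"
  obtains U where "open U" "t \<in> U" "\<And>i j. i \<in> I \<Longrightarrow> j \<in> I \<Longrightarrow> U \<inter> S i \<noteq> {} \<Longrightarrow> U \<inter> S j \<noteq> {} \<Longrightarrow> i = j"
proof -
  have "\<exists>U. open U \<and> t \<in> U \<and> (\<forall>i\<in>I. \<forall>j\<in>I. U \<inter> S i \<noteq> {} \<and> U \<inter> S j \<noteq> {} \<longrightarrow> i = j)"
    using assms unfolding disc_def by (rule spec)
  then obtain U where U: "open U" "t \<in> U" "\<forall>i\<in>I. \<forall>j\<in>I. U \<inter> S i \<noteq> {} \<and> U \<inter> S j \<noteq> {} \<longrightarrow> i = j"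
    by (elim exE conjE)
  show ?thesis
  proof (rule that[OF U(1,2)])
    fix i j assume "i \<in> I" "j \<in> I" "U \<inter> S i \<noteq> {}" "U \<inter> S j \<noteq> {}"
    then show "i = j" using U(3) by simp
  qed
qed

lemma discI:
  assumes "\<And>t. \<exists>U. open U \<and> t \<in> U \<and> (\<forall>i\<in>I. \<forall>j\<in>I. U \<inter> S i \<noteq> {} \<and> U \<inter> S j \<noteq> {} \<longrightarrow> i = j)"
  shows "disc I S"
  unfolding disc_def using assms by (rule allI)

lemma disc_mono:
  assumes "disc I S" "\<forall>i\<in>I. T i \<subseteq> S i"
  shows "disc I T"
proof (rule discI)
  fix t
  obtain U where U: "open U" "t \<in> U" "\<And>i j. i \<in> I \<Longrightarrow> j \<in> I \<Longrightarrow> U \<inter> S i \<noteq> {} \<Longrightarrow> U \<inter> S j \<noteq> {} \<Longrightarrow> i = j"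
    using discD[OF assms(1)] by metis
  have ne: "\<And>A B C. A \<inter> B \<noteq> {} \<Longrightarrow> B \<subseteq> C \<Longrightarrow> A \<inter> C \<noteq> {}" by blast
  have "\<forall>i\<in>I. \<forall>j\<in>I. U \<inter> T i \<noteq> {} \<and> U \<inter> T j \<noteq> {} \<longrightarrow> i = j"
  proof (intro ballI impI)
    fix i j assume ij: "i \<in> I" "j \<in> I" "U \<inter> T i \<noteq> {} \<and> U \<inter> T j \<noteq> {}"
    have "U \<inter> S i \<noteq> {}" using ne[of U "T i" "S i"] ij assms(2) by simp
    moreover have "U \<inter> S j \<noteq> {}" using ne[of U "T j" "S j"] ij assms(2) by simp
    ultimately show "i = j" using U(3) ij(1,2) by simp
  qed
  then show "\<exists>U. open U \<and> t \<in> U \<and> (\<forall>i\<in>I. \<forall>j\<in>I. U \<inter> T i \<noteq> {} \<and> U \<inter> T j \<noteq> {} \<longrightarrow> i = j)"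
    using U(1,2) by blast
qed

lemma disc_disj:
  assumes "disc I S" "i \<in> I" "j \<in> I" "t \<in> S i" "t \<in> S j"
  shows "i = j"
proof -
  obtain U where U: "open U" "t \<in> U" "\<And>i j. i \<in> I \<Longrightarrow> j \<in> I \<Longrightarrow> U \<inter> S i \<noteq> {} \<Longrightarrow> U \<inter> S j \<noteq> {} \<Longrightarrow> i = j"
    using discD[OF assms(1)] by metis
  have "U \<inter> S i \<noteq> {}" "U \<inter> S j \<noteq> {}" using U(2) assms(4,5) by auto
  then show ?thesis using U(3) assms(2,3) by simp
qed

lemma disc_closed:
  assumes "disc I S" "\<forall>i\<in>I. closed (S i)"
  shows "closed (\<Union>i\<in>I. S i)"
  unfolding closed_def open_subopen[of "- (\<Union>i\<in>I. S i)"]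
proof
  fix t assume t: "t \<in> - (\<Union>i\<in>I. S i)"
  obtain U where U: "open U" "t \<in> U" "\<And>i j. i \<in> I \<Longrightarrow> j \<in> I \<Longrightarrow> U \<inter> S i \<noteq> {} \<Longrightarrow> U \<inter> S j \<noteq> {} \<Longrightarrow> i = j"
    using discD[OF assms(1)] by metis
  show "\<exists>T. open T \<and> t \<in> T \<and> T \<subseteq> - (\<Union>i\<in>I. S i)"
  proof (cases "\<exists>i\<in>I. U \<inter> S i \<noteq> {}")
    case True
    then obtain i where i: "i \<in> I" "U \<inter> S i \<noteq> {}" by blast
    have "open (U - S i)" using U(1) assms(2) i(1) by (simp add: open_Diff)
    moreover have "t \<in> U - S i" using t U(2) i(1) by blast
    moreover have "U - S i \<subseteq> - (\<Union>i\<in>I. S i)"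
    proof
      fix s assume s: "s \<in> U - S i"
      show "s \<in> - (\<Union>i\<in>I. S i)"
      proof
        assume "s \<in> (\<Union>i\<in>I. S i)"
        then obtain j where j: "j \<in> I" "s \<in> S j" by blast
        then have "U \<inter> S j \<noteq> {}" using s by blast
        then have "i = j" using U(3)[OF i(1) j(1) i(2)] by simp
        then show False using s j(2) by blast
      qed
    qed
    ultimately show ?thesis by blast
  next
    case False
    then have "U \<subseteq> - (\<Union>i\<in>I. S i)" by blast
    then show ?thesis using U(1,2) by blast
  qed
qed


lemma disc_expand:
  fixes S :: "'i \<Rightarrow> 'x::metric_space set"
  assumes "disc I S"
  shows "\<exists>G. (\<forall>i. open (G i)) \<and> (\<forall>i\<in>I. S i \<subseteq> G i) \<and> disc I G"
proof -
  define P where "P = (\<lambda>t e. e > 0 \<and> (\<forall>i\<in>I. \<forall>j\<in>I. ball t e \<inter> S i \<noteq> {} \<and> ball t e \<inter> S j \<noteq> {} \<longrightarrow> i = j))"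
  have "\<forall>t. \<exists>e. P t e"
  proof
    fix t
    obtain U where U: "open U" "t \<in> U" "\<And>i j. i \<in> I \<Longrightarrow> j \<in> I \<Longrightarrow> U \<inter> S i \<noteq> {} \<Longrightarrow> U \<inter> S j \<noteq> {} \<Longrightarrow> i = j"
      using discD[OF assms(1)] by metis
    obtain e where e: "e > 0" "ball t e \<subseteq> U" using U(1,2) openE by blast
    have ne: "\<And>A B C. A \<inter> B \<noteq> {} \<Longrightarrow> A \<subseteq> C \<Longrightarrow> C \<inter> B \<noteq> {}" by blast
    have "\<forall>i\<in>I. \<forall>j\<in>I. ball t e \<inter> S i \<noteq> {} \<and> ball t e \<inter> S j \<noteq> {} \<longrightarrow> i = j"
    proof (intro ballI impI)
      fix i j assume ij: "i \<in> I" "j \<in> I" "ball t e \<inter> S i \<noteq> {} \<and> ball t e \<inter> S j \<noteq> {}"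
      have "U \<inter> S i \<noteq> {}" using ne[of "ball t e" "S i" U] ij(3) e(2) by simp
      moreover have "U \<inter> S j \<noteq> {}" using ne[of "ball t e" "S j" U] ij(3) e(2) by simp
      ultimately show "i = j" using U(3) ij(1,2) by simp
    qed
    then show "\<exists>e. P t e" using e(1) unfolding P_def by blast
  qed
  then obtain R where R: "\<And>t. P t (R t)" by (metis choice)
  have Rpos: "\<And>t. R t > 0" using R unfolding P_def by blast
  have Rdisc: "\<And>t i j s s'. i \<in> I \<Longrightarrow> j \<in> I \<Longrightarrow> s \<in> S i \<Longrightarrow> s' \<in> S j \<Longrightarrow> dist t s < R t \<Longrightarrow> dist t s' < R t \<Longrightarrow> i = j"
  proof -
    fix t i j s s' assume a: "i \<in> I" "j \<in> I" "s \<in> S i" "s' \<in> S j" "dist t s < R t" "dist t s' < R t"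
    have "ball t (R t) \<inter> S i \<noteq> {}" using a(3,5) by (auto simp: mem_ball)
    moreover have "ball t (R t) \<inter> S j \<noteq> {}" using a(4,6) by (auto simp: mem_ball)
    ultimately show "i = j" using R[of t] a(1,2) unfolding P_def by blast
  qed
  define G where "G = (\<lambda>i. \<Union>s\<in>S i. ball s (R s / 4))"
  have "\<forall>i. open (G i)" unfolding G_def by (simp add: open_UN)
  moreover have "\<forall>i\<in>I. S i \<subseteq> G i"
  proof (intro ballI subsetI)
    fix i s assume "s \<in> S i"
    moreover have "s \<in> ball s (R s / 4)" using Rpos[of s] by simp
    ultimately show "s \<in> G i" unfolding G_def by blast
  qed
  moreover have "disc I G"
  proof (rule discI)
    fix t
    have "\<forall>i\<in>I. \<forall>j\<in>I. ball t (R t / 4) \<inter> G i \<noteq> {} \<and> ball t (R t / 4) \<inter> G j \<noteq> {} \<longrightarrow> i = j"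
    proof (intro ballI impI)
      fix i j assume ij: "i \<in> I" "j \<in> I" "ball t (R t / 4) \<inter> G i \<noteq> {} \<and> ball t (R t / 4) \<inter> G j \<noteq> {}"
      obtain x where x: "x \<in> ball t (R t / 4)" "x \<in> G i" using ij(3) by blast
      obtain y where y: "y \<in> ball t (R t / 4)" "y \<in> G j" using ij(3) by blast
      obtain s where s: "s \<in> S i" "x \<in> ball s (R s / 4)" using x(2) unfolding G_def by blast
      obtain s' where s': "s' \<in> S j" "y \<in> ball s' (R s' / 4)" using y(2) unfolding G_def by blast
      have d1: "dist t s < R t / 4 + R s / 4"
        using x(1) s(2) dist_triangle[of t s x] by (simp add: mem_ball dist_commute)
      have d2: "dist t s' < R t / 4 + R s' / 4"
        using y(1) s'(2) dist_triangle[of t s' y] by (simp add: mem_ball dist_commute)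
      have d3: "dist s s' \<le> dist t s + dist t s'" using dist_triangle[of s s' t] by (simp add: dist_commute)
      have d4: "dist s' s \<le> dist t s + dist t s'" using dist_triangle[of s' s t] by (simp add: dist_commute)
      show "i = j"
      proof (cases "R s \<le> R t \<and> R s' \<le> R t")
        case True
        have "dist t s < R t" "dist t s' < R t" using True d1 d2 Rpos[of t] by linarith+
        then show ?thesis using Rdisc[OF ij(1,2) s(1) s'(1), of t] by blast
      next
        case False
        show ?thesis
        proof (cases "R s' \<le> R s")
          case True
          then have "R t < R s" using False by linarith
          then have "dist s s' < R s" using d1 d2 d3 True by linarith
          moreover have "dist s s < R s" using Rpos[of s] by simp
          ultimately show ?thesis using Rdisc[OF ij(1,2) s(1) s'(1), of s] by blast
        next
          case False2: False
          then have "R t < R s'" using False by linarith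
          then have "dist s' s < R s'" using d1 d2 d4 False2 by linarith
          moreover have "dist s' s' < R s'" using Rpos[of s'] by simp
          ultimately show ?thesis using Rdisc[OF ij(1,2) s(1) s'(1), of s'] by blast
        qed
      qed
    qed
    moreover have "t \<in> ball t (R t / 4)" using Rpos[of t] by simp
    ultimately show "\<exists>U. open U \<and> t \<in> U \<and> (\<forall>i\<in>I. \<forall>j\<in>I. U \<inter> G i \<noteq> {} \<and> U \<inter> G j \<noteq> {} \<longrightarrow> i = j)"
      by (intro exI[of _ "ball t (R t / 4)"]) simp
  qed
  ultimately show ?thesis by blast
qed


lemma DU_cu:
  fixes S :: "'i \<Rightarrow> 'x::topological_space set" and C :: "nat \<Rightarrow> 'x set set" and K :: "nat set"
  assumes C1: "\<forall>b\<in>K. UNIV \<in> C b"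
    and C2: "\<forall>b\<in>K. \<forall>(J::'i set) T. disc J T \<and> (\<forall>j\<in>J. - T j \<in> C b) \<longrightarrow> - (\<Union>j\<in>J. T j) \<in> C b"
    and dS: "disc I S"
    and SN: "\<forall>i\<in>I. \<exists>N c. (\<forall>k::nat. c k \<in> K \<and> - N k \<in> C (c k)) \<and> S i = (\<Union>k. N k)"
  shows "\<exists>\<U>. countable \<U> \<and> (\<Union>i\<in>I. S i) = \<Union>\<U> \<and> (\<forall>V\<in>\<U>. \<exists>b\<in>K. - V \<in> C b)"
proof -
  obtain N where N: "\<forall>i\<in>I. \<exists>c. (\<forall>k::nat. c k \<in> K \<and> - N i k \<in> C (c k)) \<and> S i = (\<Union>k. N i k)"
    using bchoice[OF SN] by blast
  obtain c where c: "\<forall>i\<in>I. (\<forall>k::nat. c i k \<in> K \<and> - N i k \<in> C (c i k)) \<and> S i = (\<Union>k. N i k)"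
    using bchoice[OF N] by blast
  define T where "T = (\<lambda>k b i. if c i k = b then N i k else {})"
  define U where "U = (\<lambda>k b. \<Union>i\<in>I. T k b i)"
  have dT: "disc I (T k b)" for k b
  proof (rule disc_mono[OF dS])
    show "\<forall>i\<in>I. T k b i \<subseteq> S i" using c unfolding T_def by auto
  qed
  have memU: "- U k b \<in> C b" if b: "b \<in> K" for k b
  proof -
    have "\<forall>j\<in>I. - T k b j \<in> C b"
    proof
      fix j assume j: "j \<in> I"
      show "- T k b j \<in> C b"
      proof (cases "c j k = b")
        case True then show ?thesis using c j unfolding T_def by auto
      next
        case False then show ?thesis using C1 b unfolding T_def by simp
      qed
    qed
    then show ?thesis unfolding U_def using C2 b dT by blast
  qed
  define \<U> where "\<U> = (\<lambda>(k, b). U k b) ` (UNIV \<times> K)"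
  have "countable \<U>" unfolding \<U>_def by (intro countable_image countable_SIGMA) auto
  moreover have "\<forall>V\<in>\<U>. \<exists>b\<in>K. - V \<in> C b" unfolding \<U>_def using memU by auto
  moreover have "(\<Union>i\<in>I. S i) = \<Union>\<U>"
  proof
    show "(\<Union>i\<in>I. S i) \<subseteq> \<Union>\<U>"
    proof
      fix t assume "t \<in> (\<Union>i\<in>I. S i)"
      then obtain i where i: "i \<in> I" "t \<in> S i" by blast
      then obtain k where k: "t \<in> N i k" using c by blast
      have "t \<in> T k (c i k) i" using k unfolding T_def by simp
      then have "t \<in> U k (c i k)" using i(1) unfolding U_def by blast
      moreover have "c i k \<in> K" using c i(1) by blast
      ultimately show "t \<in> \<Union>\<U>" unfolding \<U>_def by blast
    qed
  next
    show "\<Union>\<U> \<subseteq> (\<Union>i\<in>I. S i)"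
    proof
      fix t assume "t \<in> \<Union>\<U>"
      then obtain k b where "t \<in> U k b" unfolding \<U>_def by blast
      then obtain i where i: "i \<in> I" "t \<in> T k b i" unfolding U_def by blast
      then have "t \<in> N i k" unfolding T_def by (simp split: if_splits)
      then show "t \<in> (\<Union>i\<in>I. S i)" using c i(1) by blast
    qed
  qed
  ultimately show ?thesis by blast
qed


lemma DU_main:
  assumes wo: "Well_order r"
  shows "(\<forall>(I::'i set) (S::'i \<Rightarrow> 'x::metric_space set). disc I S \<and> (\<forall>i\<in>I. S i \<in> add_class_below r a)
            \<longrightarrow> (\<Union>i\<in>I. S i) \<in> add_class_below r a) \<and>
         (\<forall>(I::'i set) (S::'i \<Rightarrow> 'x set). disc I S \<and> (\<forall>i\<in>I. - S i \<in> add_class_below r a)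
            \<longrightarrow> - (\<Union>i\<in>I. S i) \<in> add_class_below r a)"
proof (induct a rule: acb_induct[OF wo])
  case (1 a)
  show ?case
  proof (cases "pred r a = {}")
    case True
    note m = acb_min[OF wo True]
    show ?thesis
    proof (intro conjI allI impI)
      fix I :: "'i set" and S :: "'i \<Rightarrow> 'x set"
      assume a: "disc I S \<and> (\<forall>i\<in>I. S i \<in> add_class_below r a)"
      then have "\<forall>i\<in>I. open (S i)" using m by blast
      then have "open (\<Union>i\<in>I. S i)" by (simp add: open_UN)
      then show "(\<Union>i\<in>I. S i) \<in> add_class_below r a" using m by blast
    next
      fix I :: "'i set" and S :: "'i \<Rightarrow> 'x set"
      assume a: "disc I S \<and> (\<forall>i\<in>I. - S i \<in> add_class_below r a)"
      then have "\<forall>i\<in>I. open (- S i)" using m by blast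
      then have "\<forall>i\<in>I. closed (S i)" by (simp add: closed_def)
      then have "closed (\<Union>i\<in>I. S i)" using disc_closed a by blast
      then have "open (- (\<Union>i\<in>I. S i))" by (simp only: open_Compl)
      then show "- (\<Union>i\<in>I. S i) \<in> add_class_below r a" using m by blast
    qed
  next
    case False
    show ?thesis
    proof (intro conjI allI impI)
      fix I :: "'i set" and S :: "'i \<Rightarrow> 'x set"
      assume a: "disc I S \<and> (\<forall>i\<in>I. S i \<in> add_class_below r a)"
      have SN: "\<forall>i\<in>I. \<exists>N c. (\<forall>k::nat. c k \<in> pred r a \<and> - N k \<in> add_class_below r (c k)) \<and> S i = (\<Union>k. N k)"
      proof
        fix i assume i: "i \<in> I"
        have "S i \<in> add_class_below r a" using a i by blast
        then show "\<exists>N c. (\<forall>k::nat. c k \<in> pred r a \<and> - N k \<in> add_class_below r (c k)) \<and> S i = (\<Union>k. N k)"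
          using acb_cu[OF wo False, of "S i"] by (rule rev_iffD1)
      qed
      have C1: "\<forall>b\<in>pred r a. (UNIV::'x set) \<in> add_class_below r b" using acb_UNIV[OF wo] by blast
      have C2: "\<forall>b\<in>pred r a. \<forall>(J::'i set) (T::'i \<Rightarrow> 'x set). disc J T \<and> (\<forall>j\<in>J. - T j \<in> add_class_below r b)
                  \<longrightarrow> - (\<Union>j\<in>J. T j) \<in> add_class_below r b"
      proof
        fix b assume b: "b \<in> pred r a"
        show "\<forall>(J::'i set) (T::'i \<Rightarrow> 'x set). disc J T \<and> (\<forall>j\<in>J. - T j \<in> add_class_below r b)
                  \<longrightarrow> - (\<Union>j\<in>J. T j) \<in> add_class_below r b" using 1[OF b] by (rule conjunct2)
      qed
      have "\<exists>\<U>. countable \<U> \<and> (\<Union>i\<in>I. S i) = \<Union>\<U> \<and> (\<forall>V\<in>\<U>. \<exists>b\<in>pred r a. - V \<in> add_class_below r b)"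
        by (rule DU_cu[OF C1 C2]) (use a SN in simp_all)
      then show "(\<Union>i\<in>I. S i) \<in> add_class_below r a" unfolding acb_mem[OF wo False] by blast
    next
      fix I :: "'i set" and S :: "'i \<Rightarrow> 'x set"
      assume a: "disc I S \<and> (\<forall>i\<in>I. - S i \<in> add_class_below r a)"
      have dS: "disc I S" using a by blast
      have SN: "\<forall>i\<in>I. \<exists>N c. (\<forall>k::nat. c k \<in> pred r a \<and> - N k \<in> add_class_below r (c k)) \<and> - S i = (\<Union>k. N k)"
      proof
        fix i assume i: "i \<in> I"
        have "- S i \<in> add_class_below r a" using a i by blast
        then show "\<exists>N c. (\<forall>k::nat. c k \<in> pred r a \<and> - N k \<in> add_class_below r (c k)) \<and> - S i = (\<Union>k. N k)"
          using acb_cu[OF wo False, of "- S i"] by (rule rev_iffD1)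
      qed
      obtain N where N: "\<forall>i\<in>I. \<exists>c. (\<forall>k::nat. c k \<in> pred r a \<and> - N i k \<in> add_class_below r (c k)) \<and> - S i = (\<Union>k. N i k)"
        using bchoice[OF SN] by blast
      obtain c where c: "\<forall>i\<in>I. (\<forall>k::nat. c i k \<in> pred r a \<and> - N i k \<in> add_class_below r (c i k)) \<and> - S i = (\<Union>k. N i k)"
        using bchoice[OF N] by blast
      obtain G where G: "\<forall>i. open (G i)" "\<forall>i\<in>I. S i \<subseteq> G i" "disc I G"
        using disc_expand[OF dS] by blast
      define A' where "A' = (\<lambda>i k b. if c i k = b then - N i k else UNIV)"
      define T where "T = (\<lambda>k b. \<Union>i\<in>I. G i \<inter> A' i k b)"
      have memT: "T k b \<in> add_class_below r b" if b: "b \<in> pred r a" for k b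
      proof -
        have P: "\<forall>(I::'i set) (S::'i \<Rightarrow> 'x set). disc I S \<and> (\<forall>i\<in>I. S i \<in> add_class_below r b)
            \<longrightarrow> (\<Union>i\<in>I. S i) \<in> add_class_below r b" using 1[OF b] by (rule conjunct1)
        have d: "disc I (\<lambda>i. G i \<inter> A' i k b)" by (rule disc_mono[OF G(3)]) blast
        have "\<forall>i\<in>I. G i \<inter> A' i k b \<in> add_class_below r b"
        proof
          fix i assume i: "i \<in> I"
          have "A' i k b \<in> add_class_below r b"
          proof (cases "c i k = b")
            case True then show ?thesis using c i unfolding A'_def by auto
          next
            case False then show ?thesis unfolding A'_def using acb_UNIV[OF wo] by simp
          qed
          then show "G i \<inter> A' i k b \<in> add_class_below r b" by (rule acb_open_Int[OF wo G(1)[rule_format]])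
        qed
        then show ?thesis unfolding T_def using P d by blast
      qed
      have eq: "(\<Union>i\<in>I. S i) = (\<Inter>k. \<Inter>b\<in>pred r a. T k b)"
      proof
        show "(\<Union>i\<in>I. S i) \<subseteq> (\<Inter>k. \<Inter>b\<in>pred r a. T k b)"
        proof
          fix t assume "t \<in> (\<Union>i\<in>I. S i)"
          then obtain i where i: "i \<in> I" "t \<in> S i" by blast
          have tG: "t \<in> G i" using G(2) i by blast
          have "t \<in> T k b" for k b
          proof -
            have "t \<notin> N i k" using c i by blast
            then have "t \<in> A' i k b" unfolding A'_def by simp
            then show ?thesis unfolding T_def using tG i(1) by blast
          qed
          then show "t \<in> (\<Inter>k. \<Inter>b\<in>pred r a. T k b)" by blast
        qed
      next
        show "(\<Inter>k. \<Inter>b\<in>pred r a. T k b) \<subseteq> (\<Union>i\<in>I. S i)"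
        proof
          fix t assume t: "t \<in> (\<Inter>k. \<Inter>b\<in>pred r a. T k b)"
          obtain b0 where b0: "b0 \<in> pred r a" using False by blast
          have "t \<in> T 0 b0" using t b0 by blast
          then obtain i where i: "i \<in> I" "t \<in> G i" unfolding T_def by blast
          have "t \<in> S i"
          proof (rule ccontr)
            assume "t \<notin> S i"
            then have "t \<in> - S i" by simp
            then obtain k where k: "t \<in> N i k" using c i(1) by blast
            have cb: "c i k \<in> pred r a" using c i(1) by blast
            have "t \<in> T k (c i k)" using t cb by blast
            then obtain j where j: "j \<in> I" "t \<in> G j" "t \<in> A' j k (c i k)" unfolding T_def by blast
            have "j = i" by (rule disc_disj[OF G(3) j(1) i(1) j(2) i(2)])
            then have "t \<in> - N i k" using j(3) unfolding A'_def by simp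
            then show False using k by simp
          qed
          then show "t \<in> (\<Union>i\<in>I. S i)" using i(1) by blast
        qed
      qed
      define \<U> where "\<U> = (\<lambda>(k, b). - T k b) ` (UNIV \<times> pred r a)"
      have "countable \<U>" unfolding \<U>_def by (intro countable_image countable_SIGMA) auto
      moreover have "- (\<Union>i\<in>I. S i) = \<Union>\<U>" unfolding eq \<U>_def by blast
      moreover have "\<forall>V\<in>\<U>. \<exists>b\<in>pred r a. - V \<in> add_class_below r b"
        unfolding \<U>_def using memT by auto
      ultimately show "- (\<Union>i\<in>I. S i) \<in> add_class_below r a" unfolding acb_mem[OF wo False] by blast
    qed
  qed
qed


lemma ac_iff:
  assumes "Field r \<noteq> {}"
  shows "additive_class r A \<longleftrightarrow> (\<exists>\<U>. countable \<U> \<and> A = \<Union>\<U> \<and> (\<forall>V\<in>\<U>. \<exists>b\<in>Field r. - V \<in> add_class_below r b))"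
  unfolding additive_class_def using assms by (simp only: if_False)

lemma ac_cu:
  assumes wo: "Well_order r" and "Field r \<noteq> {}"
  shows "additive_class r (A::'a::metric_space set) \<longleftrightarrow>
     (\<exists>N c. (\<forall>k::nat. c k \<in> Field r \<and> - N k \<in> add_class_below r (c k)) \<and> A = (\<Union>k. N k))"
  unfolding ac_iff[OF assms(2)]
  by (rule cu_iff[OF assms(2)]) (simp add: acb_UNIV[OF wo])

lemma ac_open:
  assumes wo: "Well_order r" and F: "Field r \<noteq> {}" and "open (S::'a::metric_space set)"
  shows "additive_class r S"
proof -
  obtain b where b: "b \<in> Field r" using F by blast
  obtain \<F> where U: "countable \<F>" "\<forall>F\<in>\<F>. closed F" "\<Union>\<F> = S" using open_fsig[OF assms(3)] by blast
  have "\<forall>V\<in>\<F>. \<exists>b\<in>Field r. - V \<in> add_class_below r b"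
  proof
    fix V assume "V \<in> \<F>"
    then have "open (- V)" using U(2) by auto
    then have "- V \<in> add_class_below r b" by (rule acb_open[OF wo])
    then show "\<exists>b\<in>Field r. - V \<in> add_class_below r b" using b by blast
  qed
  then show ?thesis unfolding ac_iff[OF F] using U(1,3) by blast
qed

lemma wo_total:
  assumes "Well_order r" "b \<in> Field r" "b' \<in> Field r"
  shows "(b, b') \<in> r \<or> (b', b) \<in> r"
proof -
  have L: "Linear_order r" using assms(1) by (simp only: well_order_on_def)
  then have T: "total_on (Field r) r" by (simp only: linear_order_on_def)
  have P: "Partial_order r" using L by (simp only: linear_order_on_def)
  then have "Preorder r" by (simp only: partial_order_on_def)
  then have R: "Refl r" by (simp only: preorder_on_def)
  show ?thesis
  proof (cases "b = b'")
    case True then show ?thesis using refl_onD[OF R assms(2)] by simp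
  next
    case False then show ?thesis using T assms(2,3) unfolding total_on_def by blast
  qed
qed

lemma ac_Int:
  assumes wo: "Well_order r" and F: "Field r \<noteq> {}"
    and "additive_class r (A::'a::metric_space set)" "additive_class r B"
  shows "additive_class r (A \<inter> B)"
proof -
  obtain \<U> where U: "countable \<U>" "A = \<Union>\<U>" "\<forall>V\<in>\<U>. \<exists>b\<in>Field r. - V \<in> add_class_below r b"
    using assms(3) unfolding ac_iff[OF F] by blast
  obtain \<V> where V: "countable \<V>" "B = \<Union>\<V>" "\<forall>V\<in>\<V>. \<exists>b\<in>Field r. - V \<in> add_class_below r b"
    using assms(4) unfolding ac_iff[OF F] by blast
  define \<W> where "\<W> = (\<lambda>(V, W). V \<inter> W) ` (\<U> \<times> \<V>)"
  have "countable \<W>" unfolding \<W>_def using U(1) V(1) by simp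
  moreover have "A \<inter> B = \<Union>\<W>" unfolding \<W>_def using U(2) V(2) by blast
  moreover have "\<forall>W\<in>\<W>. \<exists>b\<in>Field r. - W \<in> add_class_below r b"
  proof
    fix W assume "W \<in> \<W>"
    then obtain X Y where XY: "X \<in> \<U>" "Y \<in> \<V>" "W = X \<inter> Y" unfolding \<W>_def by blast
    obtain b where b: "b \<in> Field r" "- X \<in> add_class_below r b" using U(3) XY(1) by blast
    obtain b' where b': "b' \<in> Field r" "- Y \<in> add_class_below r b'" using V(3) XY(2) by blast
    have "- W = - X \<union> - Y" using XY(3) by simp
    show "\<exists>b\<in>Field r. - W \<in> add_class_below r b"
    proof (cases "(b, b') \<in> r")
      case True
      have "- X \<in> add_class_below r b'" by (rule acb_mono[OF wo True b(2)])
      then have "- X \<union> - Y \<in> add_class_below r b'" by (rule acb_Un[OF wo _ b'(2)])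
      then show ?thesis using b'(1) XY(3) by auto
    next
      case False
      then have r: "(b', b) \<in> r" using wo_total[OF wo b(1) b'(1)] by blast
      have "- Y \<in> add_class_below r b" by (rule acb_mono[OF wo r b'(2)])
      then have "- X \<union> - Y \<in> add_class_below r b" by (rule acb_Un[OF wo b(2)])
      then show ?thesis using b(1) XY(3) by auto
    qed
  qed
  ultimately show ?thesis unfolding ac_iff[OF F] by blast
qed

lemma ac_vimage:
  assumes wo: "Well_order r" and F: "Field r \<noteq> {}" and g: "\<forall>S. open S \<longrightarrow> open (g -` S)"
    and "additive_class r A"
  shows "additive_class r (g -` A)"
proof -
  obtain \<U> where U: "countable \<U>" "A = \<Union>\<U>" "\<forall>V\<in>\<U>. \<exists>b\<in>Field r. - V \<in> add_class_below r b"
    using assms(4) unfolding ac_iff[OF F] by blast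
  have "countable (vimage g ` \<U>)" using U(1) by simp
  moreover have "g -` A = \<Union>(vimage g ` \<U>)" using U(2) by auto
  moreover have "\<forall>W\<in>vimage g ` \<U>. \<exists>c\<in>Field r. - W \<in> add_class_below r c"
  proof
    fix W assume "W \<in> vimage g ` \<U>"
    then obtain V where V: "V \<in> \<U>" "W = g -` V" by blast
    obtain c where c: "c \<in> Field r" "- V \<in> add_class_below r c" using U(3) V(1) by blast
    have "g -` (- V) \<in> add_class_below r c" by (rule acb_vimage[OF wo g c(2)])
    then show "\<exists>c\<in>Field r. - W \<in> add_class_below r c" using c(1) V(2) by (auto simp: vimage_Compl)
  qed
  ultimately show ?thesis unfolding ac_iff[OF F] by blast
qed

lemma ac_UN:
  assumes F: "Field r \<noteq> {}" and "\<And>n::nat. additive_class r (A n)"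
  shows "additive_class r (\<Union>n. A n)"
proof -
  have "\<forall>n. \<exists>\<U>. countable \<U> \<and> A n = \<Union>\<U> \<and> (\<forall>V\<in>\<U>. \<exists>b\<in>Field r. - V \<in> add_class_below r b)"
    using assms(2) unfolding ac_iff[OF F] by blast
  then obtain \<U> where U: "\<forall>n. countable (\<U> n) \<and> A n = \<Union>(\<U> n) \<and> (\<forall>V\<in>\<U> n. \<exists>b\<in>Field r. - V \<in> add_class_below r b)"
    by (metis choice)
  have "countable (\<Union>n. \<U> n)" using U by (simp add: countable_UN)
  moreover have "(\<Union>n. A n) = \<Union>(\<Union>n. \<U> n)" using U by auto
  moreover have "\<forall>V\<in>(\<Union>n. \<U> n). \<exists>b\<in>Field r. - V \<in> add_class_below r b" using U by blast
  ultimately show ?thesis unfolding ac_iff[OF F] by blast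
qed

lemma ac_disc:
  fixes S :: "'i \<Rightarrow> 'x::metric_space set"
  assumes wo: "Well_order r" and F: "Field r \<noteq> {}" and dS: "disc I S"
    and SA: "\<forall>i\<in>I. additive_class r (S i)"
  shows "additive_class r (\<Union>i\<in>I. S i)"
proof -
  have SN: "\<forall>i\<in>I. \<exists>N c. (\<forall>k::nat. c k \<in> Field r \<and> - N k \<in> add_class_below r (c k)) \<and> S i = (\<Union>k. N k)"
  proof
    fix i assume i: "i \<in> I"
    have "additive_class r (S i)" using SA i by blast
    then show "\<exists>N c. (\<forall>k::nat. c k \<in> Field r \<and> - N k \<in> add_class_below r (c k)) \<and> S i = (\<Union>k. N k)"
      using ac_cu[OF wo F, of "S i"] by (rule rev_iffD1)
  qed
  have C1: "\<forall>b\<in>Field r. (UNIV::'x set) \<in> add_class_below r b" using acb_UNIV[OF wo] by blast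
  have C2: "\<forall>b\<in>Field r. \<forall>(J::'i set) (T::'i \<Rightarrow> 'x set). disc J T \<and> (\<forall>j\<in>J. - T j \<in> add_class_below r b)
              \<longrightarrow> - (\<Union>j\<in>J. T j) \<in> add_class_below r b"
  proof
    fix b assume b: "b \<in> Field r"
    show "\<forall>(J::'i set) (T::'i \<Rightarrow> 'x set). disc J T \<and> (\<forall>j\<in>J. - T j \<in> add_class_below r b)
              \<longrightarrow> - (\<Union>j\<in>J. T j) \<in> add_class_below r b" using DU_main[OF wo, of b] by (rule conjunct2)
  qed
  have "\<exists>\<U>. countable \<U> \<and> (\<Union>i\<in>I. S i) = \<Union>\<U> \<and> (\<forall>V\<in>\<U>. \<exists>b\<in>Field r. - V \<in> add_class_below r b)"
    by (rule DU_cu[OF C1 C2]) (use dS SN in simp_all)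
  then show ?thesis unfolding ac_iff[OF F] by blast
qed


theorem theorem3p19:
  fixes f :: "'a::metric_space \<times> 'b::metric_space \<Rightarrow> 'c::metric_space"
    and r :: "(nat \<times> nat) set"
  assumes "Well_order r" and "Field r \<noteq> {}"
    and "equi_GLP r {(\<lambda>y. f (x, y)) | x. True}"
    and "\<And>y. borel_class r (\<lambda>x. f (x, y))"
  shows "borel_class r f"
  unfolding borel_class_def
proof (intro allI impI)
  note wo = assms(1) and F = assms(2)
  fix U :: "'c set" assume oU: "open U"
  show "additive_class r (f -` U)"
  proof (cases "U = UNIV")
    case True
    then show ?thesis using ac_open[OF wo F, of "UNIV::('a \<times> 'b) set"] by simp
  next
    case False
    then have nU: "- U \<noteq> {}" by blast
    have cU: "closed (- U)" using oU by (simp only: closed_Compl)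
    define e where "e = (\<lambda>n::nat. inverse (real (Suc n)))"
    have epos: "\<And>n. e n > 0" unfolding e_def by simp
    have G: "\<forall>\<epsilon>>0. \<exists>\<A>. sigma_discrete_family \<A> \<and> (\<forall>A\<in>\<A>. additive_class r A) \<and> \<Union>\<A> = UNIV \<and>
        (\<forall>A\<in>\<A>. \<forall>g\<in>{(\<lambda>y. f (x, y)) | x. True}. \<forall>a\<in>A. \<forall>b\<in>A. dist (g a) (g b) \<le> \<epsilon>)"
      using assms(3) unfolding equi_GLP_def by assumption
    have "\<forall>n. \<exists>\<A>::'b set set. sigma_discrete_family \<A> \<and> (\<forall>A\<in>\<A>. additive_class r A) \<and> \<Union>\<A> = UNIV \<and>
        (\<forall>A\<in>\<A>. \<forall>g\<in>{(\<lambda>y. f (x, y)) | x. True}. \<forall>a\<in>A. \<forall>b\<in>A. dist (g a) (g b) \<le> e n)"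
    proof
      fix n
      show "\<exists>\<A>::'b set set. sigma_discrete_family \<A> \<and> (\<forall>A\<in>\<A>. additive_class r A) \<and> \<Union>\<A> = UNIV \<and>
        (\<forall>A\<in>\<A>. \<forall>g\<in>{(\<lambda>y. f (x, y)) | x. True}. \<forall>a\<in>A. \<forall>b\<in>A. dist (g a) (g b) \<le> e n)"
        by (rule G[rule_format, OF epos[of n]])
    qed
    from choice[OF this] obtain \<A> :: "nat \<Rightarrow> 'b set set" where
      A0: "\<forall>n. sigma_discrete_family (\<A> n) \<and> (\<forall>A\<in>\<A> n. additive_class r A) \<and> \<Union>(\<A> n) = UNIV \<and>
        (\<forall>A\<in>\<A> n. \<forall>g\<in>{(\<lambda>y. f (x, y)) | x. True}. \<forall>a\<in>A. \<forall>b\<in>A. dist (g a) (g b) \<le> e n)"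
      by (elim exE)
    have A: "\<And>n. sigma_discrete_family (\<A> n)" "\<And>n. \<forall>A\<in>\<A> n. additive_class r A"
      "\<And>n. \<Union>(\<A> n) = UNIV"
      "\<And>n. \<forall>A\<in>\<A> n. \<forall>g\<in>{(\<lambda>y. f (x, y)) | x. True}. \<forall>a\<in>A. \<forall>b\<in>A. dist (g a) (g b) \<le> e n"
      using A0 by simp_all
    have "\<forall>n. \<exists>\<D>::nat \<Rightarrow> 'b set set. (\<forall>m. discrete_family (\<D> m)) \<and> \<A> n = (\<Union>m. \<D> m)"
    proof
      fix n show "\<exists>\<D>::nat \<Rightarrow> 'b set set. (\<forall>m. discrete_family (\<D> m)) \<and> \<A> n = (\<Union>m. \<D> m)"
        using A(1)[of n] unfolding sigma_discrete_family_def by assumption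
    qed
    from choice[OF this] obtain \<D> :: "nat \<Rightarrow> nat \<Rightarrow> 'b set set" where
      D0: "\<forall>n. (\<forall>m. discrete_family (\<D> n m)) \<and> \<A> n = (\<Union>m. \<D> n m)"
      by (elim exE)
    have D: "\<And>n m. discrete_family (\<D> n m)" "\<And>n. \<A> n = (\<Union>m. \<D> n m)" using D0 by simp_all
    have Aclose: "dist (f (x, a)) (f (x, b)) \<le> e n" if "A \<in> \<A> n" "a \<in> A" "b \<in> A" for x a b A n
    proof -
      have mem: "(\<lambda>y. f (x, y)) \<in> {(\<lambda>y. f (x, y)) | x. True}" by (rule CollectI, rule exI[of _ x], simp)
      show ?thesis using A(4)[of n, rule_format, OF that(1) mem that(2) that(3)] by simp
    qed
    define W where "W = (\<lambda>n. {z. 2 * e n < infdist z (- U)})"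
    have oW: "open (W n)" for n
      unfolding W_def by (intro open_Collect_less continuous_on_infdist continuous_intros)
    define yA where "yA = (\<lambda>A::'b set. SOME y. y \<in> A)"
    have yA: "A \<noteq> {} \<Longrightarrow> yA A \<in> A" for A unfolding yA_def by (simp add: some_in_eq)
    define P where "P = (\<lambda>n A. {p. f (fst p, yA A) \<in> W n \<and> snd p \<in> A})"
    have eq: "f -` U = (\<Union>n. \<Union>m. \<Union>A\<in>\<D> n m - {{}}. P n A)"
    proof
      show "f -` U \<subseteq> (\<Union>n. \<Union>m. \<Union>A\<in>\<D> n m - {{}}. P n A)"
      proof
        fix p assume p: "p \<in> f -` U"
        obtain x y where xy: "p = (x, y)" by fastforce
        have d: "infdist (f (x, y)) (- U) > 0"
          using infdist_pos_not_in_closed[OF cU nU] p xy by simp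
        obtain n where n: "inverse (real (Suc n)) < infdist (f (x, y)) (- U) / 4"
          using reals_Archimedean[of "infdist (f (x, y)) (- U) / 4"] d by auto
        have y: "y \<in> \<Union>(\<A> n)" using A(3)[of n] by simp
        then obtain A where An: "A \<in> \<A> n" "y \<in> A" by blast
        then obtain m where m: "A \<in> \<D> n m" using D(2)[of n] by blast
        have ne: "A \<noteq> {}" using An(2) by blast
        have dd: "dist (f (x, y)) (f (x, yA A)) \<le> e n" using Aclose[OF An(1) An(2) yA[OF ne]] .
        have "infdist (f (x, y)) (- U) \<le> infdist (f (x, yA A)) (- U) + dist (f (x, y)) (f (x, yA A))"
          by (rule infdist_triangle)
        then have "2 * e n < infdist (f (x, yA A)) (- U)" using dd n epos[of n] unfolding e_def by linarith
        then have "(x, y) \<in> P n A" unfolding P_def W_def using An(2) by simp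
        then show "p \<in> (\<Union>n. \<Union>m. \<Union>A\<in>\<D> n m - {{}}. P n A)" using xy m ne by blast
      qed
    next
      show "(\<Union>n. \<Union>m. \<Union>A\<in>\<D> n m - {{}}. P n A) \<subseteq> f -` U"
      proof
        fix p assume "p \<in> (\<Union>n. \<Union>m. \<Union>A\<in>\<D> n m - {{}}. P n A)"
        then obtain n m A where nmA: "A \<in> \<D> n m" "A \<noteq> {}" "p \<in> P n A" by blast
        obtain x y where xy: "p = (x, y)" by fastforce
        have An: "A \<in> \<A> n" using nmA(1) D(2)[of n] by blast
        have yy: "y \<in> A" "f (x, yA A) \<in> W n" using nmA(3) xy unfolding P_def by auto
        have dd: "dist (f (x, yA A)) (f (x, y)) \<le> e n" using Aclose[OF An yA[OF nmA(2)] yy(1)] .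
        have "infdist (f (x, yA A)) (- U) \<le> infdist (f (x, y)) (- U) + dist (f (x, yA A)) (f (x, y))"
          by (rule infdist_triangle)
        moreover have "2 * e n < infdist (f (x, yA A)) (- U)" using yy(2) unfolding W_def by simp
        ultimately have "0 < infdist (f (x, y)) (- U)" using dd epos[of n] by linarith
        then have "f (x, y) \<notin> - U" by (metis infdist_zero less_irrefl)
        then show "p \<in> f -` U" using xy by simp
      qed
    qed
    have oF: "\<forall>S. open S \<longrightarrow> open (fst -` (S::'a set))" by (simp add: open_vimage_fst)
    have oS: "\<forall>S. open S \<longrightarrow> open (snd -` (S::'b set))" by (simp add: open_vimage_snd)
    have acP: "additive_class r (P n A)" if "A \<in> \<A> n" for n A
    proof -
      have "\<forall>S. open S \<longrightarrow> additive_class r ((\<lambda>x. f (x, yA A)) -` S)"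
        using assms(4)[of "yA A"] unfolding borel_class_def by assumption
      then have "additive_class r ((\<lambda>x. f (x, yA A)) -` W n)" using oW[of n] by simp
      then have 1: "additive_class r (fst -` ((\<lambda>x. f (x, yA A)) -` W n))" by (rule ac_vimage[OF wo F oF])
      have "additive_class r A" using A(2)[of n] that by simp
      then have 2: "additive_class r (snd -` A)" by (rule ac_vimage[OF wo F oS])
      have "P n A = fst -` ((\<lambda>x. f (x, yA A)) -` W n) \<inter> snd -` A" unfolding P_def by (simp add: set_eq_iff)
      then show ?thesis using ac_Int[OF wo F 1 2] by simp
    qed
    have discP: "disc (\<D> n m - {{}}) (P n)" for n m
    proof (rule discI)
      fix t :: "'a \<times> 'b"
      have "\<exists>V. open V \<and> snd t \<in> V \<and> (\<forall>A\<in>\<D> n m. \<forall>B\<in>\<D> n m. V \<inter> A \<noteq> {} \<and> V \<inter> B \<noteq> {} \<longrightarrow> A = B)"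
        using D(1)[of n m] unfolding discrete_family_def by (rule spec)
      then obtain V where V: "open V" "snd t \<in> V" "\<forall>A\<in>\<D> n m. \<forall>B\<in>\<D> n m. V \<inter> A \<noteq> {} \<and> V \<inter> B \<noteq> {} \<longrightarrow> A = B"
        by (elim exE conjE)
      have o: "open (UNIV \<times> V)" using V(1) by (simp add: open_Times)
      have tt: "t \<in> UNIV \<times> V" using V(2) by (cases t) simp
      have sub: "V \<inter> C \<noteq> {}" if "(UNIV \<times> V) \<inter> P n C \<noteq> {}" for C
      proof -
        have "\<exists>q. q \<in> (UNIV \<times> V) \<inter> P n C" by (subst ex_in_conv) (rule that)
        then obtain q where q: "q \<in> (UNIV \<times> V) \<inter> P n C" by (elim exE)
        have q1: "snd q \<in> V" using q by (cases q) simp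
        have q2: "snd q \<in> C" using q by (simp add: P_def)
        have "snd q \<in> V \<inter> C" using q1 q2 by (rule IntI)
        then show ?thesis by (metis empty_iff)
      qed
      have "\<forall>A\<in>\<D> n m - {{}}. \<forall>B\<in>\<D> n m - {{}}. (UNIV \<times> V) \<inter> P n A \<noteq> {} \<and> (UNIV \<times> V) \<inter> P n B \<noteq> {} \<longrightarrow> A = B"
      proof (intro ballI impI)
        fix A B assume AB: "A \<in> \<D> n m - {{}}" "B \<in> \<D> n m - {{}}"
          "(UNIV \<times> V) \<inter> P n A \<noteq> {} \<and> (UNIV \<times> V) \<inter> P n B \<noteq> {}"
        have "V \<inter> A \<noteq> {}" using sub AB(3) by simp
        moreover have "V \<inter> B \<noteq> {}" using sub AB(3) by simp
        moreover have "A \<in> \<D> n m" "B \<in> \<D> n m" using AB(1,2) by simp_all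
        ultimately show "A = B" using V(3)[rule_format, of A B] by blast
      qed
      then show "\<exists>U. open U \<and> t \<in> U \<and> (\<forall>i\<in>\<D> n m - {{}}. \<forall>j\<in>\<D> n m - {{}}. U \<inter> P n i \<noteq> {} \<and> U \<inter> P n j \<noteq> {} \<longrightarrow> i = j)"
        using o tt by (intro exI[of _ "UNIV \<times> V"]) simp
    qed
    have acD: "additive_class r (\<Union>A\<in>\<D> n m - {{}}. P n A)" for n m
    proof (rule ac_disc[OF wo F discP])
      show "\<forall>i\<in>\<D> n m - {{}}. additive_class r (P n i)"
      proof
        fix i assume "i \<in> \<D> n m - {{}}"
        then have "i \<in> \<A> n" using D(2)[of n] by blast
        then show "additive_class r (P n i)" by (rule acP)
      qed
    qed
    have acD2: "additive_class r (\<Union>m. \<Union>A\<in>\<D> n m - {{}}. P n A)" for n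
      using ac_UN[OF F, of "\<lambda>m. \<Union>A\<in>\<D> n m - {{}}. P n A"] acD by blast
    have "additive_class r (\<Union>n. \<Union>m. \<Union>A\<in>\<D> n m - {{}}. P n A)"
      using ac_UN[OF F, of "\<lambda>n. \<Union>m. \<Union>A\<in>\<D> n m - {{}}. P n A"] acD2 by blast
    then show ?thesis unfolding eq .
  qed
qed

end
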